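(* Let $d\ge1$ and let $\{\alpha_k\}$ and $\{j_k\}$ be as in the statement below. Let $K\in\mathbb R$ and $k\in\mathbb N$. (1) For any measurable $A\subset\mathcal C[K,K+d]$, writing $a=\mathcal B^{[K,K+d]}(A)$, $$\mathbb P\big(\mathcal L^{[K,K+d]}(k,\cdot)\in A\big)\le a\cdot 49\,e^{189\alpha_k^{-5}}\exp\Big\{\alpha_k^{-5/6}\Big(\log\big(a^{-1}(4j_k\vee1)\big)\Big)^{5/6}\Big\}.$$ (2) For $s>(\tfrac12\log2)^{1/2}\vee(\tfrac12\log(4j_k\vee1))^{1/2}$, $$\mathbb P\Big(\sup_{x\in[K,K+d]}\big|\mathcal L^{[K,K+d]}(k,x)\big|\ge s\,d^{1/2}\Big)\le 98\,e^{189\alpha_k^{-5}}\exp\Big\{-2s^2\big(1-2^{2/3}\alpha_k^{-5/6}s^{-1/3}\big)\Big\}.$$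
   Context: The Airy line ensemble $\mathcal A:\mathbb N\times\mathbb R\to\mathbb R$ (under probability $\mathbb P$) is the ordered collection of continuous curves whose finite-dimensional point processes $\{(s,\mathcal A(j,s)):j\in\mathbb N,s\in I\}$, $I$ finite, are determinantal with the extended Airy$_2$ kernel; $\mathcal L(i,x)=2^{-1/2}(\mathcal A(i,x)-x^2)$. For $d\ge1$, $K\in\mathbb R$: $\mathcal C[K,K+d]$ is the space of continuous functions on $[K,K+d]$ vanishing at both endpoints; $\mathcal L^{[K,K+d]}(k,x)=\mathcal L(k,x)-(K+d-x)d^{-1}\mathcal L(k,K)-(x-K)d^{-1}\mathcal L(k,K+d)$; $\mathcal B^{[K,K+d]}$ is the law of Brownian bridge (diffusion parameter one) on $[K,K+d]$ vanishing at both endpoints; $f_k$ is the Radon–Nikodym derivative of the law of $\mathcal L^{[K,K+d]}(k,\cdot)$ with respect to $\mathcal B^{[K,K+d]}$. The sequence $\alpha_k\in(0,1]$ (depending on $d$ only, with $\inf\alpha_k^{1/k}>0$) is one for which $j_k=\int\exp\{\alpha_k(\log f_k)^{6/5}\}\,d\mathcal B^{[K,K+d]}$ is finite and independent of $K$ for every $k$ (such a sequence exists). *)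

theory Defs
  imports "HOL-Probability.Probability"
begin

definition airy_Ai :: "real \<Rightarrow> real" where
  "airy_Ai x = Lim at_top (\<lambda>R. (1 / pi) * integral {0..R} (\<lambda>t. cos (t ^ 3 / 3 + x * t)))"

definition ext_airy_kernel :: "real \<Rightarrow> real \<Rightarrow> real \<Rightarrow> real \<Rightarrow> real" where
  "ext_airy_kernel s x t y =
     (if s \<ge> t
      then (LINT l:{0..}|lborel. exp (- l * (s - t)) * airy_Ai (x + l) * airy_Ai (y + l))
      else - (LINT l:{..0}|lborel. exp (- l * (s - t)) * airy_Ai (x + l) * airy_Ai (y + l)))"

definition det_n :: "nat \<Rightarrow> (nat \<Rightarrow> nat \<Rightarrow> real) \<Rightarrow> real" where
  "det_n n M = (\<Sum>\<sigma>\<in>{\<sigma>. \<sigma> permutes {..<n}}. of_int (sign \<sigma>) * (\<Prod>i<n. M i (\<sigma> i)))"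

text \<open>Curves are indexed by j \<ge> 1 (the value at index 0 is irrelevant).
  The determinantal condition: for every finite set I of times, the point process
  {(s, A(j,s)) : j \<ge> 1, s \<in> I} has n-point correlation functions
  det[K(s_a,x_a; s_b,x_b)] with respect to (counting measure on I) x Lebesgue,
  expressed via the defining identity for factorial moment measures.\<close>
definition airy_line_ensemble :: "'w measure \<Rightarrow> ('w \<Rightarrow> nat \<Rightarrow> real \<Rightarrow> real) \<Rightarrow> bool" where
  "airy_line_ensemble M A \<longleftrightarrow>
     prob_space M \<and>
     (\<forall>j x. (\<lambda>\<omega>. A \<omega> j x) \<in> borel_measurable M) \<and>
     (\<forall>\<omega>\<in>space M. \<forall>j\<ge>1. continuous_on UNIV (A \<omega> j) \<and> (\<forall>x. A \<omega> (Suc j) x \<le> A \<omega> j x)) \<and>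
     (\<forall>(I::real set) (n::nat) (\<phi>::(nat \<Rightarrow> real) \<Rightarrow> (nat \<Rightarrow> real) \<Rightarrow> ennreal).
        finite I \<longrightarrow> (\<forall>s. \<phi> s \<in> borel_measurable (PiM {..<n} (\<lambda>_. lborel))) \<longrightarrow>
        (\<integral>\<^sup>+ \<omega>. (\<integral>\<^sup>+ p. \<phi> (\<lambda>i\<in>{..<n}. fst (p i)) (\<lambda>i\<in>{..<n}. A \<omega> (snd (p i)) (fst (p i)))
              \<partial>count_space {p \<in> PiE {..<n} (\<lambda>_. I \<times> {1..}). inj_on p {..<n}}) \<partial>M)
        = (\<Sum>s\<in>PiE {..<n} (\<lambda>_. I).
             \<integral>\<^sup>+ x. \<phi> s x * ennreal (det_n n (\<lambda>a b. ext_airy_kernel (s a) (x a) (s b) (x b)))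
               \<partial>PiM {..<n} (\<lambda>_. lborel)))"

definition airy_L :: "('w \<Rightarrow> nat \<Rightarrow> real \<Rightarrow> real) \<Rightarrow> 'w \<Rightarrow> nat \<Rightarrow> real \<Rightarrow> real" where
  "airy_L A \<omega> i x = (A \<omega> i x - x ^ 2) / sqrt 2"

definition bridge_L :: "('w \<Rightarrow> nat \<Rightarrow> real \<Rightarrow> real) \<Rightarrow> real \<Rightarrow> real \<Rightarrow> 'w \<Rightarrow> nat \<Rightarrow> real \<Rightarrow> real" where
  "bridge_L A K d \<omega> k x = airy_L A \<omega> k x - (K + d - x) / d * airy_L A \<omega> k K
                                         - (x - K) / d * airy_L A \<omega> k (K + d)"

definition C0 :: "real \<Rightarrow> real \<Rightarrow> (real \<Rightarrow> real) set" where
  "C0 K d = {g \<in> extensional {K..K+d}. continuous_on {K..K+d} g \<and> g K = 0 \<and> g (K + d) = 0}"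

text \<open>Measurable structure: trace of the product (cylinder) sigma-algebra, which is
  the Borel sigma-algebra of the uniform topology on C[K,K+d].\<close>
definition bridge_space :: "real \<Rightarrow> real \<Rightarrow> (real \<Rightarrow> real) measure" where
  "bridge_space K d = restrict_space (PiM {K..K+d} (\<lambda>_. borel)) (C0 K d)"

definition heat_kernel :: "real \<Rightarrow> real \<Rightarrow> real" where
  "heat_kernel t y = exp (- (y ^ 2) / (2 * t)) / sqrt (2 * pi * t)"

text \<open>Joint density of Brownian bridge (diffusion parameter one) on [K,K+d], vanishing
  at both endpoints, at increasing times ts 0 < ... < ts (m-1) in (K,K+d).\<close>
definition bb_fdd_density :: "real \<Rightarrow> real \<Rightarrow> nat \<Rightarrow> (nat \<Rightarrow> real) \<Rightarrow> (nat \<Rightarrow> real) \<Rightarrow> real" where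
  "bb_fdd_density K d m ts x =
     (let tt = (\<lambda>i. if i = 0 then K else if i \<le> m then ts (i - 1) else K + d);
          xx = (\<lambda>i. if i = 0 then 0 else if i \<le> m then x (i - 1) else 0)
      in (\<Prod>i\<le>m. heat_kernel (tt (Suc i) - tt i) (xx (Suc i) - xx i)) / heat_kernel d 0)"

text \<open>mu is the law B^{[K,K+d]} of Brownian bridge: a probability measure on C[K,K+d]
  with the Brownian bridge finite-dimensional distributions (which determine it).\<close>
definition is_brownian_bridge :: "real \<Rightarrow> real \<Rightarrow> (real \<Rightarrow> real) measure \<Rightarrow> bool" where
  "is_brownian_bridge K d \<mu> \<longleftrightarrow>
     prob_space \<mu> \<and> sets \<mu> = sets (bridge_space K d) \<and>
     (\<forall>m (ts :: nat \<Rightarrow> real).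
        (\<forall>i<m. K < ts i \<and> ts i < K + d) \<longrightarrow> (\<forall>i. Suc i < m \<longrightarrow> ts i < ts (Suc i)) \<longrightarrow>
        (\<forall>S \<in> sets (PiM {..<m} (\<lambda>_. borel)).
           emeasure \<mu> {g \<in> space \<mu>. (\<lambda>i\<in>{..<m}. g (ts i)) \<in> S}
           = (\<integral>\<^sup>+ x\<in>S. ennreal (bb_fdd_density K d m ts x) \<partial>PiM {..<m} (\<lambda>_. lborel))))"

definition bridge_law :: "'w measure \<Rightarrow> ('w \<Rightarrow> nat \<Rightarrow> real \<Rightarrow> real) \<Rightarrow> real \<Rightarrow> real \<Rightarrow> nat \<Rightarrow> (real \<Rightarrow> real) measure" where
  "bridge_law M A K d k = distr M (bridge_space K d) (\<lambda>\<omega>. restrict (bridge_L A K d \<omega> k) {K..K+d})"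

definition rn_density :: "'w measure \<Rightarrow> ('w \<Rightarrow> nat \<Rightarrow> real \<Rightarrow> real) \<Rightarrow> (real \<Rightarrow> real) measure \<Rightarrow> real \<Rightarrow> real \<Rightarrow> nat \<Rightarrow> (real \<Rightarrow> real) \<Rightarrow> real" where
  "rn_density M A B K d k g = enn2real (RN_deriv B (bridge_law M A K d k) g)"

end

theory Submission
  imports Defs
begin


lemma heat_normal: "t > 0 \<Longrightarrow> heat_kernel t y = normal_density 0 (sqrt t) y"
  by (simp add: heat_kernel_def normal_density_def divide_simps)

lemma heat_nonneg: "0 \<le> t \<Longrightarrow> 0 \<le> heat_kernel t y"
  by (simp add: heat_kernel_def)

lemma heat_meas[measurable]: "heat_kernel t \<in> borel_measurable borel"
  unfolding heat_kernel_def by measurable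

lemma heat_conv:
  assumes "a > 0" "b > 0"
  shows "(\<integral>\<^sup>+w. ennreal (heat_kernel a (z - w) * heat_kernel b (w - p)) \<partial>lborel) = ennreal (heat_kernel (a+b) (z - p))"
proof -
  have "(\<integral>\<^sup>+w. ennreal (heat_kernel a (z - w) * heat_kernel b (w - p)) \<partial>lborel)
      = (\<integral>\<^sup>+y. ennreal (heat_kernel a (z - (p + 1 * y)) * heat_kernel b ((p + 1 * y) - p)) \<partial>lborel)"
    by (subst nn_integral_real_affine[of _ 1 p]) auto
  also have "\<dots> = (\<integral>\<^sup>+y. ennreal (normal_density 0 (sqrt a) ((z - p) - y) * normal_density 0 (sqrt b) y) \<partial>lborel)"
    using assms by (simp add: heat_normal algebra_simps)
  also have "\<dots> = ennreal (normal_density 0 (sqrt ((sqrt a)\<^sup>2 + (sqrt b)\<^sup>2)) (z - p))"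
    using conv_normal_density_zero_mean[of "sqrt a" "sqrt b"] assms by (auto dest: fun_cong[where x="z-p"])
  also have "\<dots> = ennreal (heat_kernel (a+b) (z - p))"
    using assms by (simp add: heat_normal)
  finally show ?thesis .
qed

lemma heat_shift: "b > 0 \<Longrightarrow> heat_kernel b w * exp (-2*c*(c-w)/b) = heat_kernel b (w - 2*c)"
  unfolding heat_kernel_def
  by (simp add: exp_add[symmetric] field_simps power2_eq_square)


definition gdens :: "real \<Rightarrow> nat \<Rightarrow> (nat \<Rightarrow> real) \<Rightarrow> real \<Rightarrow> real \<Rightarrow> (nat \<Rightarrow> real) \<Rightarrow> real" where
 "gdens K m ts r z x = (let tt = (\<lambda>i. if i = 0 then K else if i \<le> m then ts (i - 1) else r);
          xx = (\<lambda>i. if i = 0 then 0 else if i \<le> m then x (i - 1) else z)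
      in (\<Prod>i\<le>m. heat_kernel (tt (Suc i) - tt i) (xx (Suc i) - xx i)))"

lemma bb_eq: "bb_fdd_density K d m ts x = gdens K m ts (K+d) 0 x / heat_kernel d 0"
  by (simp add: bb_fdd_density_def gdens_def Let_def)

lemma gdens_0: "gdens K 0 ts r z x = heat_kernel (r - K) z"
  by (simp add: gdens_def)

lemma gdens_Suc: "gdens K (Suc m) ts r z (x(m:=w)) = gdens K m ts (ts m) w x * heat_kernel (r - ts m) (z - w)"
  apply (simp only: gdens_def Let_def prod.atMost_Suc[of _ m])
  apply (rule arg_cong2[where f="(*)"])
   apply (rule prod.cong, simp)
  subgoal for i by (cases "i = m") auto
  apply simp
  done

lemma comp_meas[measurable]: "(\<lambda>x. x j) \<in> borel_measurable (PiM I (\<lambda>_. lborel))"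
proof (cases "j \<in> I")
  case True
  then show ?thesis using measurable_component_singleton[OF True, of "\<lambda>_. lborel"] by simp
next
  case False
  have "(\<lambda>x. undefined) \<in> borel_measurable (PiM I (\<lambda>_. lborel))" by simp
  then show ?thesis
    by (rule measurable_cong[THEN iffD1, rotated]) (use False in \<open>auto simp: space_PiM PiE_def extensional_def\<close>)
qed

lemma gdens_meas[measurable]: "gdens K m ts r z \<in> borel_measurable (PiM I (\<lambda>_. lborel))"
  unfolding gdens_def Let_def
  by (intro borel_measurable_prod) (auto intro!: measurable_compose[OF _ heat_meas])


lemma inc_bounded:
  assumes "\<forall>i. Suc i < n \<longrightarrow> ts i < ts (Suc i)" "i < j" "j < n"
  shows "(ts i :: real) < ts j"
  using assms(2,3)
proof (induction j)
  case 0 then show ?case by simp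
next
  case (Suc j)
  show ?case
  proof (cases "i = j")
    case True then show ?thesis using assms(1) Suc.prems by auto
  next
    case False
    then have "ts i < ts j" using Suc by auto
    also have "ts j < ts (Suc j)" using assms(1) Suc.prems by auto
    finally show ?thesis .
  qed
qed

lemma TM:
  assumes "\<forall>i<m. K < ts i" "\<forall>i. Suc i < m \<longrightarrow> ts i < ts (Suc i)" "\<forall>i<m. ts i < r" "K < r"
  shows "(\<integral>\<^sup>+x. ennreal (gdens K m ts r z x) \<partial>PiM {..<m} (\<lambda>_. lborel)) \<le> ennreal (heat_kernel (r - K) z)"
  using assms
proof (induction m arbitrary: r z)
  case 0
  then show ?case by (simp add: gdens_0 PiM_empty)
next
  case (Suc m)
  interpret product_sigma_finite "\<lambda>_. lborel" by standard
  have tm: "K < ts m" "ts m < r" using Suc.prems by auto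
  have mono: "\<forall>i<m. ts i < ts m"
    using inc_bounded[OF Suc.prems(2)] by auto
  have "(\<integral>\<^sup>+x. ennreal (gdens K (Suc m) ts r z x) \<partial>PiM {..<Suc m} (\<lambda>_. lborel))
      = (\<integral>\<^sup>+w. \<integral>\<^sup>+x. ennreal (gdens K (Suc m) ts r z (x(m:=w))) \<partial>PiM {..<m} (\<lambda>_. lborel) \<partial>lborel)"
    unfolding lessThan_Suc by (subst product_nn_integral_insert_rev) auto
  also have "\<dots> = (\<integral>\<^sup>+w. ennreal (heat_kernel (r - ts m) (z - w)) * \<integral>\<^sup>+x. ennreal (gdens K m ts (ts m) w x) \<partial>PiM {..<m} (\<lambda>_. lborel) \<partial>lborel)"
    using tm by (subst nn_integral_cmult[symmetric]) (auto simp: gdens_Suc ennreal_mult' heat_nonneg mult.commute intro!: nn_integral_cong)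
  also have "\<dots> \<le> (\<integral>\<^sup>+w. ennreal (heat_kernel (r - ts m) (z - w)) * ennreal (heat_kernel (ts m - K) (w - 0)) \<partial>lborel)"
    using Suc.IH[of "ts m"] Suc.prems mono tm by (intro nn_integral_mono mult_left_mono) auto
  also have "\<dots> = ennreal (heat_kernel (r - K) (z - 0))"
    using heat_conv[of "r - ts m" "ts m - K" z 0] tm by (simp add: ennreal_mult' heat_nonneg)
  finally show ?case by simp
qed


definition Hit :: "real \<Rightarrow> nat \<Rightarrow> (nat \<Rightarrow> real) set" where
  "Hit c m = {x. \<exists>i<m. c * x i \<ge> c^2}"

lemma Hit_Suc: "indicator (Hit c (Suc m)) (x(m:=w)) = (if c * w \<ge> c^2 then 1 else (indicator (Hit c m) x :: ennreal))"
  by (auto simp: Hit_def indicator_def less_Suc_eq)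

lemma Hit_meas[measurable]: "(indicator (Hit c m) :: _ \<Rightarrow> ennreal) \<in> borel_measurable (PiM I (\<lambda>_. lborel))"
proof -
  have "Hit c m \<inter> space (PiM I (\<lambda>_. lborel)) = {x \<in> space (PiM I (\<lambda>_. lborel)). \<exists>i<m. c * x i \<ge> c^2}"
    by (auto simp: Hit_def)
  also have "\<dots> \<in> sets (PiM I (\<lambda>_. lborel))" by measurable
  finally show ?thesis by (simp add: borel_measurable_indicator_iff)
qed

lemma hit_bound:
  assumes "\<forall>i<m. K < ts i" "\<forall>i. Suc i < m \<longrightarrow> ts i < ts (Suc i)" "\<forall>i<m. ts i < r" "K < r"
  shows "(\<integral>\<^sup>+x. ennreal (gdens K m ts r z x) * indicator (Hit c m) x \<partial>PiM {..<m} (\<lambda>_. lborel))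
     \<le> ennreal (heat_kernel (r - K) z * exp (-2*c*(c-z)/(r-K)))"
  using assms
proof (induction m arbitrary: r z)
  case 0
  then show ?case by (simp add: Hit_def)
next
  case (Suc m)
  interpret product_sigma_finite "\<lambda>_. lborel" by standard
  have tm: "K < ts m" "ts m < r" using Suc.prems by auto
  have mono: "\<forall>i<m. ts i < ts m"
    using inc_bounded[OF Suc.prems(2)] by auto
  have inner: "(\<integral>\<^sup>+x. ennreal (gdens K m ts (ts m) w x) * (if c * w \<ge> c^2 then 1 else indicator (Hit c m) x) \<partial>PiM {..<m} (\<lambda>_. lborel))
     \<le> ennreal (heat_kernel (ts m - K) w * exp (-2*c*(c-w)/(ts m-K)))" for w
  proof (cases "c * w \<ge> c^2")
    case True
    have "1 \<le> exp (-2*c*(c-w)/(ts m-K))"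
      using True tm by (auto simp: power2_eq_square algebra_simps)
    then have "heat_kernel (ts m - K) w \<le> heat_kernel (ts m - K) w * exp (-2*c*(c-w)/(ts m-K))"
      using heat_nonneg[of "ts m - K" w] tm by (metis less_eq_real_def diff_gt_0_iff_gt mult_le_cancel_left1 not_less)
    then have "ennreal (heat_kernel (ts m - K) w) \<le> ennreal (heat_kernel (ts m - K) w * exp (-2*c*(c-w)/(ts m-K)))"
      by (rule ennreal_leI)
    then show ?thesis using True TM[of m K ts "ts m" w] Suc.prems mono tm
      by (auto intro: order_trans)
  next
    case False
    then show ?thesis using Suc.IH[of "ts m" w] Suc.prems mono tm by auto
  qed
  have "(\<integral>\<^sup>+x. ennreal (gdens K (Suc m) ts r z x) * indicator (Hit c (Suc m)) x \<partial>PiM {..<Suc m} (\<lambda>_. lborel))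
      = (\<integral>\<^sup>+w. \<integral>\<^sup>+x. ennreal (gdens K (Suc m) ts r z (x(m:=w))) * indicator (Hit c (Suc m)) (x(m:=w)) \<partial>PiM {..<m} (\<lambda>_. lborel) \<partial>lborel)"
    unfolding lessThan_Suc by (subst product_nn_integral_insert_rev) auto
  also have "\<dots> = (\<integral>\<^sup>+w. ennreal (heat_kernel (r - ts m) (z - w)) * \<integral>\<^sup>+x. ennreal (gdens K m ts (ts m) w x) * (if c * w \<ge> c^2 then 1 else indicator (Hit c m) x) \<partial>PiM {..<m} (\<lambda>_. lborel) \<partial>lborel)"
    using tm by (subst nn_integral_cmult[symmetric]) (auto simp: gdens_Suc Hit_Suc ennreal_mult' heat_nonneg mult.commute mult.left_commute intro!: nn_integral_cong)
  also have "\<dots> \<le> (\<integral>\<^sup>+w. ennreal (heat_kernel (r - ts m) (z - w)) * ennreal (heat_kernel (ts m - K) w * exp (-2*c*(c-w)/(ts m-K))) \<partial>lborel)"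
    using inner by (intro nn_integral_mono mult_left_mono) auto
  also have "\<dots> = (\<integral>\<^sup>+w. ennreal (heat_kernel (r - ts m) (z - w) * heat_kernel (ts m - K) (w - 2*c)) \<partial>lborel)"
    using tm by (intro nn_integral_cong) (simp add: heat_shift[symmetric] ennreal_mult' heat_nonneg)
  also have "\<dots> = ennreal (heat_kernel (r - K) (z - 2*c))"
    using heat_conv[of "r - ts m" "ts m - K" z "2*c"] tm by simp
  also have "\<dots> = ennreal (heat_kernel (r - K) z * exp (-2*c*(c-z)/(r-K)))"
    using tm heat_shift[of "r - K" z c] by simp
  finally show ?case .
qed


lemma bb_grid:
  assumes BB: "is_brownian_bridge K d \<mu>" and d: "d > 0" and y: "y > 0"
    and ts: "\<forall>i<m. K < ts i \<and> ts i < K + d" "\<forall>i. Suc i < m \<longrightarrow> ts i < ts (Suc i)"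
  shows "emeasure \<mu> {g \<in> space \<mu>. \<exists>i<m. \<bar>g (ts i)\<bar> > y} \<le> ennreal (2 * exp (-2*y^2/d))"
proof -
  define S where "S = {x \<in> space (PiM {..<m} (\<lambda>_. borel)). \<exists>i<m. \<bar>x i\<bar> > (y::real)}"
  have S: "S \<in> sets (PiM {..<m} (\<lambda>_. borel))" unfolding S_def by measurable
  have h0: "heat_kernel d 0 > 0" using d by (simp add: heat_kernel_def)
  have eqset: "{g \<in> space \<mu>. \<exists>i<m. \<bar>g (ts i)\<bar> > y} = {g \<in> space \<mu>. (\<lambda>i\<in>{..<m}. g (ts i)) \<in> S}"
    by (auto simp: S_def space_PiM)
  have "emeasure \<mu> {g \<in> space \<mu>. (\<lambda>i\<in>{..<m}. g (ts i)) \<in> S}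
      = (\<integral>\<^sup>+ x\<in>S. ennreal (bb_fdd_density K d m ts x) \<partial>PiM {..<m} (\<lambda>_. lborel))"
    using BB ts S unfolding is_brownian_bridge_def by blast
  also have "\<dots> \<le> (\<integral>\<^sup>+ x. ennreal (1 / heat_kernel d 0) * (ennreal (gdens K m ts (K+d) 0 x) * indicator (Hit y m) x)
                  + ennreal (1 / heat_kernel d 0) * (ennreal (gdens K m ts (K+d) 0 x) * indicator (Hit (-y) m) x) \<partial>PiM {..<m} (\<lambda>_. lborel))"
  proof (intro nn_integral_mono)
    fix x
    have "indicator S x \<le> (indicator (Hit y m) x + indicator (Hit (-y) m) x :: ennreal)"
    proof (cases "x \<in> S")
      case True
      then obtain i where i: "i < m" "\<bar>x i\<bar> > y" by (auto simp: S_def)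
      then have "y * x i \<ge> y^2 \<or> (-y) * x i \<ge> (-y)^2"
      proof -
        have "x i \<ge> y \<or> -x i \<ge> y" using i by auto
        then show ?thesis using mult_left_mono[of y "x i" y] mult_left_mono[of y "-x i" y] y
          by (auto simp: power2_eq_square)
      qed
      then have "x \<in> Hit y m \<or> x \<in> Hit (-y) m" using i unfolding Hit_def by blast
      then show ?thesis by (auto simp: indicator_def)
    qed simp
    then have "ennreal (bb_fdd_density K d m ts x) * indicator S x
       \<le> ennreal (1 / heat_kernel d 0) * ennreal (gdens K m ts (K+d) 0 x) * (indicator (Hit y m) x + indicator (Hit (-y) m) x)"
    proof -
      have "ennreal (bb_fdd_density K d m ts x) = ennreal (1 / heat_kernel d 0) * ennreal (gdens K m ts (K+d) 0 x)"
        using h0 by (simp add: bb_eq ennreal_mult' divide_inverse mult.commute)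
      then show ?thesis using \<open>indicator S x \<le> _\<close> by (simp add: mult_left_mono)
    qed
    then show "ennreal (bb_fdd_density K d m ts x) * indicator S x \<le> ennreal (1 / heat_kernel d 0) * (ennreal (gdens K m ts (K+d) 0 x) * indicator (Hit y m) x)
                  + ennreal (1 / heat_kernel d 0) * (ennreal (gdens K m ts (K+d) 0 x) * indicator (Hit (-y) m) x)"
      by (simp add: distrib_left mult.assoc)
  qed
  also have "\<dots> = ennreal (1 / heat_kernel d 0) * (\<integral>\<^sup>+ x. ennreal (gdens K m ts (K+d) 0 x) * indicator (Hit y m) x \<partial>PiM {..<m} (\<lambda>_. lborel))
                + ennreal (1 / heat_kernel d 0) * (\<integral>\<^sup>+ x. ennreal (gdens K m ts (K+d) 0 x) * indicator (Hit (-y) m) x \<partial>PiM {..<m} (\<lambda>_. lborel))"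
    by (simp add: nn_integral_add nn_integral_cmult)
  also have "\<dots> \<le> ennreal (1 / heat_kernel d 0) * ennreal (heat_kernel d 0 * exp (-2*y*(y-0)/d))
                + ennreal (1 / heat_kernel d 0) * ennreal (heat_kernel d 0 * exp (-2*(-y)*(-y-0)/d))"
    using hit_bound[of m K ts "K+d" 0 y] hit_bound[of m K ts "K+d" 0 "-y"] ts d
    by (intro add_mono mult_left_mono) auto
  also have "\<dots> = ennreal (2 * exp (-2*y^2/d))"
    using h0 by (simp add: ennreal_mult[symmetric] power2_eq_square ennreal_plus[symmetric] del: ennreal_plus)
  finally show ?thesis using eqset by simp
qed


lemma space_bridge: "space (bridge_space K d) = C0 K d"
  by (auto simp: bridge_space_def space_restrict_space space_PiM C0_def PiE_def)

definition Tg :: "real \<Rightarrow> real \<Rightarrow> nat \<Rightarrow> real \<Rightarrow> (real \<Rightarrow> real) set" where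
  "Tg K d N y = {g \<in> C0 K d. \<exists>i < 2^N - 1. \<bar>g (K + d * (real i + 1) / 2^N)\<bar> > y}"

lemma Tg_meas: assumes "d > 0" shows "Tg K d N y \<in> sets (bridge_space K d)"
proof -
  have comp: "(\<lambda>g. g t) \<in> borel_measurable (bridge_space K d)" if "t \<in> {K..K+d}" for t
    unfolding bridge_space_def
    by (rule measurable_restrict_space1) (use that in simp)
  have "\<forall>i < (2::nat)^N - 1. K + d * (real i + 1) / 2^N \<in> {K..K+d}"
  proof (intro allI impI)
    fix i :: nat assume "i < 2^N - 1"
    then have "Suc i \<le> 2^N" by linarith
    then have "real (Suc i) \<le> real (2^N)" by (simp only: of_nat_le_iff)
    then have "real i + 1 \<le> 2^N" by simp
    then have "d * (real i + 1) / 2^N \<le> d" using assms by (simp add: divide_simps)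
    then show "K + d * (real i + 1) / 2^N \<in> {K..K+d}" using assms by auto
  qed
  then have [measurable]: "\<And>i. i < 2^N - 1 \<Longrightarrow> (\<lambda>g. g (K + d * (real i + 1) / 2^N)) \<in> borel_measurable (bridge_space K d)"
    using comp by blast
  have "Tg K d N y = {g \<in> space (bridge_space K d). \<exists>i < 2^N - 1. \<bar>g (K + d * (real i + 1) / 2^N)\<bar> > y}"
    by (simp add: Tg_def space_bridge)
  also have "\<dots> \<in> sets (bridge_space K d)" by measurable
  finally show ?thesis .
qed

lemma Tg_bound:
  assumes BB: "is_brownian_bridge K d \<mu>" and d: "d > 0" and y: "y > 0"
  shows "emeasure \<mu> (Tg K d N y) \<le> ennreal (2 * exp (-2*y^2/d))"
proof -
  define ts where "ts i = K + d * (real i + 1) / 2^N" for i :: nat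
  have sp: "space \<mu> = C0 K d"
    using BB sets_eq_imp_space_eq[of \<mu> "bridge_space K d"] by (simp add: is_brownian_bridge_def space_bridge)
  have ts1: "\<forall>i<2^N - 1. K < ts i \<and> ts i < K + d"
  proof (intro allI impI)
    fix i :: nat assume "i < 2^N - 1"
    then have "Suc i < 2^N" by linarith
    then have "real (Suc i) < real (2^N)" by (simp only: of_nat_less_iff)
    then have "real i + 1 < 2^N" by simp
    then have "d * (real i + 1) < d * 2^N" using d by simp
    moreover have "(K + d) * 2^N = K*2^N + d*2^N" by (simp add: algebra_simps)
    ultimately have "K * 2 ^ N + d * (real i + 1) < (K + d) * 2 ^ N" by linarith
    then show "K < ts i \<and> ts i < K + d" using d by (simp add: ts_def divide_simps add_pos_pos)
  qed
  have ts2: "\<forall>i. Suc i < 2^N - 1 \<longrightarrow> ts i < ts (Suc i)"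
    using d by (simp add: ts_def divide_simps)
  have "Tg K d N y = {g \<in> space \<mu>. \<exists>i<2^N - 1. \<bar>g (ts i)\<bar> > y}"
    by (simp add: Tg_def sp ts_def)
  then show ?thesis using bb_grid[OF BB d y ts1 ts2] by simp
qed

lemma Tg_mono: "Tg K d N y \<subseteq> Tg K d (Suc N) y"
proof
  fix g assume "g \<in> Tg K d N y"
  then obtain i where i: "i < 2^N - 1" "\<bar>g (K + d * (real i + 1) / 2^N)\<bar> > y" "g \<in> C0 K d"
    by (auto simp: Tg_def)
  have "2 * i + 1 < 2^Suc N - 1" using i(1) by simp
  moreover have "K + d * (real (2*i+1) + 1) / 2^Suc N = K + d * (real i + 1) / 2^N"
    by (simp add: field_simps)
  ultimately show "g \<in> Tg K d (Suc N) y" using i unfolding Tg_def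
    by (intro CollectI conjI bexI[where x="2*i+1"]) auto
qed


lemma cover:
  assumes g: "g \<in> C0 K d" and d: "d > 0" and y: "y > 0" and sup: "y < (SUP x\<in>{K..K+d}. \<bar>g x\<bar>)"
  shows "\<exists>N. g \<in> Tg K d N y"
proof -
  have cont: "continuous_on {K..K+d} g" and g0: "g K = 0" "g (K+d) = 0" using g by (auto simp: C0_def)
  have "compact ((\<lambda>x. \<bar>g x\<bar>) ` {K..K+d})"
    by (intro compact_continuous_image continuous_on_rabs cont) auto
  then have bdd: "bdd_above ((\<lambda>x. \<bar>g x\<bar>) ` {K..K+d})" by (auto intro: bounded_imp_bdd_above compact_imp_bounded)
  obtain t where t: "t \<in> {K..K+d}" "y < \<bar>g t\<bar>"
    using sup less_cSUP_iff[OF _ bdd] d by auto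
  obtain \<delta> where \<delta>: "\<delta> > 0" "\<forall>x'\<in>{K..K+d}. dist x' t < \<delta> \<longrightarrow> dist (g x') (g t) < \<bar>g t\<bar> - y"
    using cont t unfolding continuous_on_iff by (metis diff_gt_0_iff_gt)
  obtain N :: nat where N: "d / \<delta> < 2^N" using real_arch_pow[of 2 "d/\<delta>"] by auto
  have p: "(2::real)^N > 0" by simp
  define q where "q = (t - K) * 2^N / d"
  have q0: "q \<ge> 0" using t d by (simp add: q_def)
  define i0 where "i0 = nat \<lfloor>q\<rfloor>"
  have ri: "real i0 \<le> q" "q < real i0 + 1" using q0 by (auto simp: i0_def)
  define u where "u = K + d * real i0 / 2^N"
  have "d * real i0 / 2^N \<le> d * q / 2^N" using ri d by (simp add: divide_right_mono)
  also have "d * q / 2^N = t - K" using d by (simp add: q_def)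
  finally have ut: "u \<le> t" by (simp add: u_def)
  have "d * q / 2^N < d * (real i0 + 1) / 2^N" using ri d by (simp add: divide_strict_right_mono)
  moreover have "d * (real i0 + 1) / 2^N = d * real i0 / 2^N + d / 2^N" by (simp add: field_simps)
  moreover have "d * q / 2^N = t - K" using d by (simp add: q_def)
  ultimately have "t - u < d / 2^N" unfolding u_def by linarith
  also have "d / 2^N < \<delta>" using N \<delta> p by (simp add: field_simps)
  finally have "t - u < \<delta>" .
  moreover have uK: "u \<ge> K" using d by (simp add: u_def)
  ultimately have "dist (g u) (g t) < \<bar>g t\<bar> - y" using \<delta> ut t by (auto simp: dist_real_def)
  then have gu: "\<bar>g u\<bar> > y" by (auto simp: dist_real_def)
  have "u \<in> {K..K+d}" using uK ut t by auto
  have "i0 \<noteq> 0"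
  proof
    assume "i0 = 0" then have "u = K" by (simp add: u_def)
    then show False using gu g0 y by simp
  qed
  moreover have "d * real i0 / 2^N \<le> d" using ut t by (simp add: u_def)
  then have "real i0 \<le> 2^N" using d by (simp add: field_simps)
  then have "i0 \<le> 2^N" by (metis of_nat_le_iff of_nat_numeral of_nat_power)
  moreover have "i0 \<noteq> 2^N"
  proof
    assume "i0 = 2^N" then have "u = K + d" by (simp add: u_def)
    then show False using gu g0 y by simp
  qed
  ultimately have "i0 - 1 < 2^N - 1" "real (i0 - 1) + 1 = real i0" by auto
  then show ?thesis using gu g unfolding Tg_def u_def by (intro exI[of _ N] CollectI conjI exI[of _ "i0 - 1"]) auto
qed


definition yseq :: "real \<Rightarrow> nat \<Rightarrow> real" where
  "yseq x n = x - x * inverse (real (Suc n)) / 2"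

definition Sx :: "real \<Rightarrow> real \<Rightarrow> real \<Rightarrow> (real \<Rightarrow> real) set" where
  "Sx K d x = (\<Inter>n. \<Union>N. Tg K d N (yseq x n))"

lemma yseq_pos: "x > 0 \<Longrightarrow> yseq x n > 0" "x > 0 \<Longrightarrow> yseq x n < x"
proof -
  assume x: "x > 0"
  have "inverse (real (Suc n)) \<le> 1" "inverse (real (Suc n)) > 0" by (auto simp: field_simps)
  then have "x * inverse (real (Suc n)) \<le> x" "x * inverse (real (Suc n)) > 0"
    using x by (auto intro: mult_left_le)
  then show "yseq x n > 0" "yseq x n < x" unfolding yseq_def by linarith+
qed

lemma Sx_meas: "d > 0 \<Longrightarrow> Sx K d x \<in> sets (bridge_space K d)"
  unfolding Sx_def using Tg_meas by blast

lemma Sx_cover: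
  assumes "g \<in> C0 K d" "d > 0" "x > 0" "(SUP t\<in>{K..K+d}. \<bar>g t\<bar>) \<ge> x"
  shows "g \<in> Sx K d x"
  unfolding Sx_def
proof
  fix n
  have "yseq x n < (SUP t\<in>{K..K+d}. \<bar>g t\<bar>)" using yseq_pos[of x n] assms by linarith
  then obtain N where "g \<in> Tg K d N (yseq x n)" using cover[of g K d "yseq x n"] assms yseq_pos[of x n] by auto
  then show "g \<in> (\<Union>N. Tg K d N (yseq x n))" by blast
qed

lemma Sx_bound:
  assumes BB: "is_brownian_bridge K d \<mu>" and d: "d > 0" and x: "x > 0"
  shows "measure \<mu> (Sx K d x) \<le> 2 * exp (-2*x^2/d)"
proof -
  interpret prob_space \<mu> using BB by (simp add: is_brownian_bridge_def)
  have sets: "sets \<mu> = sets (bridge_space K d)" using BB by (simp add: is_brownian_bridge_def)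
  have bnd: "measure \<mu> (Sx K d x) \<le> 2 * exp (-2*(yseq x n)^2/d)" for n
  proof -
    have rng: "range (\<lambda>N. Tg K d N (yseq x n)) \<subseteq> sets \<mu>" using Tg_meas[OF d] sets by auto
    have inc: "incseq (\<lambda>N. Tg K d N (yseq x n))" by (rule incseq_SucI) (rule Tg_mono)
    have "emeasure \<mu> (\<Union>N. Tg K d N (yseq x n)) = (SUP N. emeasure \<mu> (Tg K d N (yseq x n)))"
      using SUP_emeasure_incseq[OF rng inc] by simp
    also have "\<dots> \<le> ennreal (2 * exp (-2*(yseq x n)^2/d))"
      using Tg_bound[OF BB d yseq_pos(1)[OF x]] by (intro SUP_least) auto
    finally have "emeasure \<mu> (Sx K d x) \<le> ennreal (2 * exp (-2*(yseq x n)^2/d))"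
      using emeasure_mono[of "Sx K d x" "\<Union>N. Tg K d N (yseq x n)" \<mu>] rng
      unfolding Sx_def by (meson INF_lower UNIV_I order_trans sets.countable_UN)
    then show ?thesis by (simp add: emeasure_eq_measure)
  qed
  have "(\<lambda>n. yseq x n) \<longlonglongrightarrow> x - x * 0 / 2"
    unfolding yseq_def by (intro tendsto_intros LIMSEQ_inverse_real_of_nat) simp
  then have "(\<lambda>n. 2 * exp (-2*(yseq x n)^2/d)) \<longlonglongrightarrow> 2 * exp (-2*x^2/d)"
    using d by (auto intro!: tendsto_intros)
  then show ?thesis by (rule LIMSEQ_le_const) (use bnd in blast)
qed



lemma key_ineq:
  fixes a T u :: real
  assumes a: "0 < a" and T: "0 \<le> T" and u: "T < u"
  shows "u - a * u powr (6/5) \<le> T - a * T powr (6/5) + a powr (-5)"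
proof -
  have u0: "u > 0" using T u by linarith
  define p where "p = u powr (1/5)"
  define q where "q = T powr (1/5)"
  have up: "u powr (6/5) = u * p"
  proof -
    have "u powr (6/5) = u powr (1 + 1/5)" by simp
    also have "\<dots> = u * p" using u0 by (subst powr_add) (simp add: p_def)
    finally show ?thesis .
  qed
  have tq: "T powr (6/5) = T * q"
  proof (cases "T = 0")
    case True then show ?thesis by simp
  next
    case False
    have "T powr (6/5) = T powr (1 + 1/5)" by simp
    also have "\<dots> = T * q" using T by (subst powr_add) (simp add: q_def)
    finally show ?thesis .
  qed
  have q0: "q \<ge> 0" by (simp add: q_def)
  have pq: "q \<le> p" unfolding p_def q_def using T u by (intro powr_mono2) auto
  have a5: "a powr (-5) > 0" using a by simp
  show ?thesis
  proof (cases "a * q \<ge> 1")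
    case True
    have "u * (1 - a * p) \<le> u * (1 - a * q)"
      using u0 pq a by (intro mult_left_mono) (auto intro: mult_left_mono)
    moreover have "(u - T) * (1 - a * q) \<le> 0"
      using u True by (intro mult_nonneg_nonpos) auto
    ultimately have "u * (1 - a * p) \<le> T * (1 - a * q)" by (simp add: algebra_simps)
    then have "u - a * (u * p) \<le> T - a * (T * q)" by (simp add: algebra_simps)
    then show ?thesis unfolding up tq using a5 by linarith
  next
    case False
    have Tq: "T * (1 - a * q) \<ge> 0" using False T by auto
    have "u * (1 - a * p) \<le> a powr (-5)"
    proof (cases "a * p \<ge> 1")
      case True
      then have "u * (1 - a * p) \<le> 0" using u0 by (intro mult_nonneg_nonpos) auto
      then show ?thesis using a5 by linarith
    next
      case False
      have p0: "p > 0" using u0 by (simp add: p_def)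
      have "p < 1 / a" using False a by (simp add: field_simps)
      then have "p ^ 5 < (1 / a) ^ 5" using p0 by (intro power_strict_mono) auto
      moreover have "p ^ 5 = u"
      proof -
        have "p ^ 5 = p powr (real 5)" using powr_realpow[OF p0, of 5] by simp
        also have "\<dots> = u powr (1/5 * real 5)" unfolding p_def by (rule powr_powr)
        also have "\<dots> = u" using u0 by simp
        finally show ?thesis .
      qed
      moreover have "(1 / a) ^ 5 = a powr (-5)"
      proof -
        have "a powr (-5) = inverse (a powr (real 5))" by (simp add: powr_minus)
        also have "\<dots> = inverse (a ^ 5)" using powr_realpow[OF a, of 5] by simp
        also have "\<dots> = (1/a)^5" by (simp add: power_one_over inverse_eq_divide)
        finally show ?thesis by simp
      qed
      moreover have "u * (1 - a * p) \<le> u" using u0 p0 a by (simp add: mult_nonneg_nonneg)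
      ultimately show ?thesis by linarith
    qed
    then have "u - a * (u * p) \<le> T - a * (T * q) + a powr (-5)" using Tq by (simp add: algebra_simps)
    then show ?thesis unfolding up tq by linarith
  qed
qed

lemma pw:
  fixes a T f :: real
  assumes a: "0 < a" and T: "0 \<le> T" and f: "0 \<le> f"
  shows "f \<le> exp T + exp (a * (max 0 (ln f)) powr (6/5)) * exp (T - a * T powr (6/5) + a powr (-5))"
proof (cases "max 0 (ln f) \<le> T")
  case True
  have "f \<le> exp T"
  proof (cases "f = 0")
    case False
    then have "f = exp (ln f)" using f by simp
    also have "\<dots> \<le> exp T" using True by simp
    finally show ?thesis .
  qed simp
  moreover have "0 \<le> exp (a * (max 0 (ln f)) powr (6/5)) * exp (T - a * T powr (6/5) + a powr (-5))" by simp
  ultimately show ?thesis by linarith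
next
  case False
  then have lf1: "ln f > T" using T by linarith
  then have lf2: "max 0 (ln f) = ln f" using T by simp
  have lf3: "f > 0"
  proof (rule ccontr)
    assume "\<not> f > 0" then have "f = 0" using f by simp
    then show False using lf1 T by simp
  qed
  note lf = lf1 lf2 lf3
  have "ln f \<le> a * (ln f) powr (6/5) + (T - a * T powr (6/5) + a powr (-5))"
    using key_ineq[OF a T lf(1)] by linarith
  then have "exp (ln f) \<le> exp (a * (ln f) powr (6/5) + (T - a * T powr (6/5) + a powr (-5)))" by simp
  then have "f \<le> exp (a * (max 0 (ln f)) powr (6/5)) * exp (T - a * T powr (6/5) + a powr (-5))"
    using lf by (simp add: exp_add)
  moreover have "0 \<le> exp T" by simp
  ultimately show ?thesis by linarith
qed



lemma F_props:
  assumes ale: "airy_line_ensemble M A" and d: "d > 0" and k: "k \<ge> 1"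
  shows "(\<lambda>\<omega>. restrict (bridge_L A K d \<omega> k) {K..K+d}) \<in> M \<rightarrow>\<^sub>M bridge_space K d"
    and "\<omega> \<in> space M \<Longrightarrow> restrict (bridge_L A K d \<omega> k) {K..K+d} \<in> C0 K d"
proof -
  have meas: "\<And>j x. (\<lambda>\<omega>. A \<omega> j x) \<in> borel_measurable M"
    and cont: "\<And>\<omega>. \<omega> \<in> space M \<Longrightarrow> continuous_on UNIV (A \<omega> k)"
    using ale k unfolding airy_line_ensemble_def by auto
  have C: "restrict (bridge_L A K d \<omega> k) {K..K+d} \<in> C0 K d" if \<omega>: "\<omega> \<in> space M" for \<omega>
  proof -
    have c1: "continuous_on UNIV (A \<omega> k)" using cont \<omega> .
    have "continuous_on {K..K+d} (bridge_L A K d \<omega> k)"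
      unfolding bridge_L_def airy_L_def
      using d by (intro continuous_intros continuous_on_subset[OF c1]) auto
    then have "continuous_on {K..K+d} (restrict (bridge_L A K d \<omega> k) {K..K+d})"
      by (rule continuous_on_cong[THEN iffD1, rotated 2]) auto
    moreover have "bridge_L A K d \<omega> k K = 0" "bridge_L A K d \<omega> k (K+d) = 0"
      using d by (simp_all add: bridge_L_def field_simps)
    ultimately show ?thesis using d by (simp add: C0_def)
  qed
  then show "\<omega> \<in> space M \<Longrightarrow> restrict (bridge_L A K d \<omega> k) {K..K+d} \<in> C0 K d" .
  have "(\<lambda>\<omega>. restrict (bridge_L A K d \<omega> k) {K..K+d}) \<in> M \<rightarrow>\<^sub>M PiM {K..K+d} (\<lambda>_. borel)"
  proof (rule measurable_PiM_single')
    fix i assume i: "i \<in> {K..K+d}"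
    have [measurable]: "\<And>j x. (\<lambda>\<omega>. A \<omega> j x) \<in> borel_measurable M" by (rule meas)
    have "(\<lambda>\<omega>. bridge_L A K d \<omega> k i) \<in> borel_measurable M"
      unfolding bridge_L_def airy_L_def by measurable
    moreover have "(\<lambda>\<omega>. restrict (bridge_L A K d \<omega> k) {K..K+d} i) = (\<lambda>\<omega>. bridge_L A K d \<omega> k i)"
      using i by simp
    ultimately show "(\<lambda>\<omega>. restrict (bridge_L A K d \<omega> k) {K..K+d} i) \<in> borel_measurable M" by simp
  qed (auto simp: Pi_iff PiE_iff extensional_def)
  then show "(\<lambda>\<omega>. restrict (bridge_L A K d \<omega> k) {K..K+d}) \<in> M \<rightarrow>\<^sub>M bridge_space K d"
    unfolding bridge_space_def using C by (intro measurable_restrict_space2) auto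
qed


lemma const_ineq:
  fixes x :: real assumes "x > 0"
  shows "1 + exp x / 4 \<le> 49 * exp (189 * x)"
proof -
  have "exp x \<le> exp (189 * x)" using assms by simp
  moreover have "1 \<le> exp (189 * x)" using assms by simp
  ultimately show ?thesis by linarith
qed

lemma gen:
  assumes ale: "airy_line_ensemble M A" and d: "d > 0" and k: "k \<ge> 1"
    and BB: "is_brownian_bridge K d \<mu>"
    and al: "0 < \<alpha>" "\<alpha> \<le> 1"
    and ac: "absolutely_continuous \<mu> (bridge_law M A K d k)"
    and jd: "(\<integral>\<^sup>+ g. ennreal (exp (\<alpha> * (max 0 (ln (rn_density M A \<mu> K d k g))) powr (6/5))) \<partial>\<mu>) = ennreal J"
    and S: "S \<in> sets (bridge_space K d)" and aS: "measure \<mu> S \<le> a'" and a': "0 < a'" "a' \<le> max (4 * J) 1"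
  shows "measure M {\<omega> \<in> space M. restrict (bridge_L A K d \<omega> k) {K..K+d} \<in> S}
     \<le> a' * 49 * exp (189 * \<alpha> powr (-5)) * exp (\<alpha> powr (-5/6) * (ln (max (4 * J) 1 / a')) powr (5/6))"
proof -
  interpret M: prob_space M using ale by (simp add: airy_line_ensemble_def)
  interpret mu: prob_space \<mu> using BB by (simp add: is_brownian_bridge_def)
  have setsmu: "sets \<mu> = sets (bridge_space K d)" using BB by (simp add: is_brownian_bridge_def)
  define F where "F \<omega> = restrict (bridge_L A K d \<omega> k) {K..K+d}" for \<omega>
  have Fm: "F \<in> M \<rightarrow>\<^sub>M bridge_space K d" unfolding F_def by (rule F_props(1)[OF ale d k])
  define law where "law = bridge_law M A K d k"
  have law_def': "law = distr M (bridge_space K d) F" unfolding law_def bridge_law_def F_def ..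
  interpret law: prob_space law unfolding law_def' by (rule M.prob_space_distr[OF Fm])
  have setslaw: "sets law = sets \<mu>" using setsmu by (simp add: law_def')
  have ac': "absolutely_continuous \<mu> law" using ac by (simp add: law_def)
  have Smu: "S \<in> sets \<mu>" using S setsmu by simp
  have eqM: "measure M {\<omega> \<in> space M. F \<omega> \<in> S} = measure law S"
    unfolding law_def' using measure_distr[OF Fm S] by (simp add: vimage_def Int_def conj_commute)
  define R where "R = RN_deriv \<mu> law"
  have Rm[measurable]: "R \<in> borel_measurable \<mu>" unfolding R_def by simp
  have dens: "density \<mu> R = law" unfolding R_def
    by (rule mu.density_RN_deriv[OF ac' setslaw])
  have fin: "AE x in \<mu>. R x \<noteq> \<infinity>" unfolding R_def
    by (rule mu.RN_deriv_finite[OF _ ac' setslaw]) unfold_locales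
  define f where "f x = enn2real (R x)" for x
  have fr: "f x = rn_density M A \<mu> K d k x" for x by (simp add: f_def R_def law_def rn_density_def)
  define h where "h x = exp (\<alpha> * (max 0 (ln (f x))) powr (6/5))" for x
  have hm[measurable]: "h \<in> borel_measurable \<mu>" unfolding h_def f_def by measurable
  have jh: "(\<integral>\<^sup>+x. ennreal (h x) \<partial>\<mu>) = ennreal J" using jd by (simp add: h_def fr)
  define J4 where "J4 = max (4 * J) 1"
  define L where "L = ln (J4 / a')"
  have L0: "L \<ge> 0" using a' by (simp add: L_def J4_def)
  define T where "T = \<alpha> powr (-5/6) * L powr (5/6)"
  have T0: "T \<ge> 0" by (simp add: T_def)
  have aT: "\<alpha> * T powr (6/5) = L"
  proof -
    have "T powr (6/5) = (\<alpha> powr (-5/6)) powr (6/5) * (L powr (5/6)) powr (6/5)"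
      unfolding T_def by (rule powr_mult)
    also have "\<dots> = \<alpha> powr (-1) * L"
      using L0 by (simp add: powr_powr)
    finally show ?thesis using al by (simp add: powr_minus)
  qed
  define C where "C = exp (T - \<alpha> * T powr (6/5) + \<alpha> powr (-5))"
  have C_eq: "C = exp T * (a' / J4) * exp (\<alpha> powr (-5))"
  proof -
    have "C = exp T * exp (- L) * exp (\<alpha> powr (-5))" unfolding C_def aT by (simp add: exp_add exp_diff exp_minus field_simps)
    moreover have "exp (- L) = a' / J4"
    proof -
      have pos: "J4 / a' > 0" using a' by (simp add: J4_def)
      have "exp (- L) = inverse (exp L)" by (simp add: exp_minus)
      also have "exp L = J4 / a'" unfolding L_def using pos by simp
      finally show ?thesis by simp
    qed
    ultimately show ?thesis by simp
  qed
  have pwb: "ennreal (f x) \<le> ennreal (exp T) + ennreal C * ennreal (h x)" for x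
  proof -
    have "f x \<ge> 0" by (simp add: f_def)
    from pw[OF al(1) T0 this] have "f x \<le> exp T + C * h x"
      unfolding C_def h_def by (simp add: mult.commute)
    then have "ennreal (f x) \<le> ennreal (exp T + C * h x)" by (rule ennreal_leI)
    also have "\<dots> = ennreal (exp T) + ennreal (C * h x)"
      by (rule ennreal_plus) (auto simp: C_def h_def)
    also have "ennreal (C * h x) = ennreal C * ennreal (h x)"
      by (rule ennreal_mult) (auto simp: C_def h_def)
    finally show ?thesis .
  qed
  have "emeasure law S = (\<integral>\<^sup>+x. R x * indicator S x \<partial>\<mu>)"
    using emeasure_density[OF Rm Smu] dens by simp
  also have "\<dots> \<le> (\<integral>\<^sup>+x. ennreal (exp T) * indicator S x + ennreal C * ennreal (h x) \<partial>\<mu>)"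
  proof (rule nn_integral_mono_AE)
    show "AE x in \<mu>. R x * indicator S x \<le> ennreal (exp T) * indicator S x + ennreal C * ennreal (h x)"
      using fin
    proof eventually_elim
      case (elim x)
      then have "R x = ennreal (f x)" by (simp add: f_def less_top)
      then have "R x * indicator S x \<le> (ennreal (exp T) + ennreal C * ennreal (h x)) * indicator S x"
        using pwb[of x] by (simp add: mult_right_mono)
      also have "\<dots> \<le> ennreal (exp T) * indicator S x + ennreal C * ennreal (h x)"
        by (auto simp: indicator_def)
      finally show ?case .
    qed
  qed
  also have "\<dots> = ennreal (exp T) * emeasure \<mu> S + ennreal C * ennreal J"
    using Smu jh by (simp add: nn_integral_add nn_integral_cmult)
  also have "\<dots> \<le> ennreal (exp T * a' + C * (J4 / 4))"
  proof -
    have "emeasure \<mu> S \<le> ennreal a'" using aS by (simp add: mu.emeasure_eq_measure ennreal_leI)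
    moreover have "ennreal J \<le> ennreal (J4 / 4)" by (rule ennreal_leI) (simp add: J4_def)
    ultimately have "ennreal (exp T) * emeasure \<mu> S + ennreal C * ennreal J \<le> ennreal (exp T) * ennreal a' + ennreal C * ennreal (J4 / 4)"
      by (intro add_mono mult_left_mono) auto
    also have "\<dots> = ennreal (exp T * a' + C * (J4 / 4))"
    proof -
      have c0: "C \<ge> 0" "J4 / 4 \<ge> 0" "exp T * a' \<ge> 0" using a' by (auto simp: C_def J4_def)
      have "ennreal (exp T * a' + C * (J4 / 4)) = ennreal (exp T * a') + ennreal (C * (J4 / 4))"
        using c0 by (intro ennreal_plus) auto
      also have "\<dots> = ennreal (exp T) * ennreal a' + ennreal C * ennreal (J4 / 4)"
        using c0 a' by (simp only: ennreal_mult[symmetric] exp_ge_zero less_imp_le)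
      finally show ?thesis by simp
    qed
    finally show ?thesis .
  qed
  finally have "emeasure law S \<le> ennreal (exp T * a' + C * (J4 / 4))" .
  then have "ennreal (measure law S) \<le> ennreal (exp T * a' + C * (J4 / 4))"
    by (subst (asm) law.emeasure_eq_measure)
  moreover have "exp T * a' + C * (J4 / 4) \<ge> 0" using a' by (simp add: C_def J4_def)
  ultimately have "measure law S \<le> exp T * a' + C * (J4 / 4)"
    by (simp only: ennreal_le_iff)
  also have "\<dots> = a' * exp T * (1 + exp (\<alpha> powr (-5)) / 4)"
    using C_eq by (simp add: J4_def field_simps)
  also have "\<dots> \<le> a' * exp T * (49 * exp (189 * \<alpha> powr (-5)))"
    using const_ineq[of "\<alpha> powr (-5)"] al a' by (intro mult_left_mono) auto
  finally show ?thesis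
    unfolding eqM[unfolded F_def] T_def L_def J4_def by (simp add: mult_ac)
qed


lemma final_real:
  fixes s al J :: real
  assumes s: "s > sqrt (ln 2 / 2)" "s > sqrt (ln (max (4 * J) 1) / 2)" and al: "al > 0" and E: "E \<ge> 0"
  defines "a' \<equiv> 2 * exp (-2 * s^2)"
  shows "a' * 49 * E * exp (al powr (-5/6) * (ln (max (4 * J) 1 / a')) powr (5/6))
     \<le> 98 * E * exp (- 2 * s ^ 2 * (1 - 2 powr (2/3) * al powr (-5/6) * s powr (-1/3)))"
    and "0 < a'" "a' \<le> max (4 * J) 1"
proof -
  have ln2: "ln (2::real) > 0" by simp
  have "sqrt (ln 2 / 2) \<ge> 0" by simp
  then have s0: "s > 0" using s(1) by linarith
  have ss1: "s^2 > ln 2 / 2"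
  proof -
    have "sqrt (ln 2 / 2) ^ 2 < s ^ 2" using s(1) by (intro power_strict_mono) auto
    then show ?thesis using ln2 by simp
  qed
  define J4 where "J4 = max (4 * J) (1::real)"
  have J41: "J4 \<ge> 1" by (simp add: J4_def)
  have ss2: "s^2 > ln J4 / 2"
  proof -
    have "sqrt (ln J4 / 2) ^ 2 < s ^ 2" using s(2) by (intro power_strict_mono) (auto simp: J4_def)
    then show ?thesis using J41 by simp
  qed
  show a0: "0 < a'" by (simp add: a'_def)
  have "a' < 1"
  proof -
    have "ln 2 < 2 * s^2" using ss1 by linarith
    then have "exp (ln 2) < exp (2 * s^2)" by (rule exp_less_mono)
    then have "2 < exp (2 * s^2)" by simp
    then show ?thesis by (simp add: a'_def exp_minus field_simps)
  qed
  then show a1: "a' \<le> max (4 * J) 1" by simp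
  define L where "L = ln (J4 / a')"
  have L_eq: "L = ln J4 - ln 2 + 2 * s^2"
    using J41 a0 by (simp add: L_def a'_def ln_div ln_mult)
  have L0: "L \<ge> 0" using a1 a0 by (simp add: L_def J4_def)
  have L4: "L \<le> 4 * s^2" using L_eq ss2 ln2 by linarith
  have "L powr (5/6) \<le> (4 * s^2) powr (5/6)" using L0 L4 by (intro powr_mono2) auto
  also have "(4 * s^2) powr (5/6) = 2 * 2 powr (2/3) * s powr (5/3)"
  proof -
    have "(4 * s^2) powr (5/6) = 4 powr (5/6) * (s^2) powr (5/6)" by (rule powr_mult)
    also have "(4::real) powr (5/6) = 2 * 2 powr (2/3)"
    proof -
      have "(4::real) powr (5/6) = (2 powr 2) powr (5/6)" by simp
      also have "\<dots> = 2 powr (5/3)" by (simp only: powr_powr) simp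
      also have "\<dots> = 2 powr (1 + 2/3)" by simp
      also have "\<dots> = 2 * 2 powr (2/3)" by (subst powr_add) simp
      finally show ?thesis .
    qed
    also have "(s^2) powr (5/6) = s powr (5/3)"
    proof -
      have "s^2 = s powr (real 2)" using powr_realpow[OF s0, of 2] by simp
      then have "(s^2) powr (5/6) = (s powr (real 2)) powr (5/6)" by simp
      also have "\<dots> = s powr (real 2 * (5/6))" by (rule powr_powr)
      finally show ?thesis by simp
    qed
    finally show ?thesis .
  qed
  finally have Lb: "L powr (5/6) \<le> 2 * 2 powr (2/3) * s powr (5/3)" .
  have sp: "s^2 * s powr (-1/3) = s powr (5/3)"
  proof -
    have "s^2 = s powr (real 2)" using powr_realpow[OF s0, of 2] by simp
    then have "s^2 * s powr (-1/3) = s powr 2 * s powr (-1/3)" by simp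
    also have "\<dots> = s powr (2 + -1/3)" by (rule powr_add[symmetric])
    finally show ?thesis by simp
  qed
  have "al powr (-5/6) * L powr (5/6) \<le> al powr (-5/6) * (2 * 2 powr (2/3) * s powr (5/3))"
    using Lb by (intro mult_left_mono) auto
  also have "\<dots> = - 2 * s ^ 2 * (1 - 2 powr (2/3) * al powr (-5/6) * s powr (-1/3)) + 2 * s^2"
    unfolding sp[symmetric] by (simp add: algebra_simps)
  finally have ex: "-2 * s^2 + al powr (-5/6) * L powr (5/6) \<le> - 2 * s ^ 2 * (1 - 2 powr (2/3) * al powr (-5/6) * s powr (-1/3))"
    by linarith
  have "a' * 49 * E * exp (al powr (-5/6) * L powr (5/6)) = 98 * E * exp (-2 * s^2 + al powr (-5/6) * L powr (5/6))"
    using exp_add[of "- 2 * s ^ 2" "al powr (-5/6) * L powr (5/6)"] by (simp add: a'_def)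
  also have "\<dots> \<le> 98 * E * exp (- 2 * s ^ 2 * (1 - 2 powr (2/3) * al powr (-5/6) * s powr (-1/3)))"
    using ex E by (intro mult_left_mono) auto
  finally show "a' * 49 * E * exp (al powr (-5/6) * (ln (max (4 * J) 1 / a')) powr (5/6))
     \<le> 98 * E * exp (- 2 * s ^ 2 * (1 - 2 powr (2/3) * al powr (-5/6) * s powr (-1/3)))"
    by (simp add: L_def J4_def)
qed

theorem corollary2p2:
  fixes M :: "'w measure" and A :: "'w \<Rightarrow> nat \<Rightarrow> real \<Rightarrow> real"
    and d :: real and alpha j :: "nat \<Rightarrow> real"
    and BB :: "real \<Rightarrow> (real \<Rightarrow> real) measure"
    and K :: real and k :: nat
  assumes ale: "airy_line_ensemble M A"
    and d: "d \<ge> 1"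
    and BB: "\<forall>K'. is_brownian_bridge K' d (BB K')"
    and alpha_range: "\<forall>k'\<ge>1. 0 < alpha k' \<and> alpha k' \<le> 1"
    and alpha_inf: "\<exists>c>0. \<forall>k'\<ge>1. c \<le> alpha k' powr (1 / real k')"
    and abs_cont: "\<forall>K'. \<forall>k'\<ge>1. absolutely_continuous (BB K') (bridge_law M A K' d k')"
    and j_def: "\<forall>K'. \<forall>k'\<ge>1.
       (\<integral>\<^sup>+ g. ennreal (exp (alpha k' * (max 0 (ln (rn_density M A (BB K') K' d k' g))) powr (6/5)))
          \<partial>BB K') = ennreal (j k')"
    and k: "k \<ge> 1"
  shows "(\<forall>S \<in> sets (bridge_space K d).
            let a = measure (BB K) S in
            measure M {\<omega> \<in> space M. restrict (bridge_L A K d \<omega> k) {K..K+d} \<in> S}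
              \<le> a * 49 * exp (189 * alpha k powr (-5))
                  * exp (alpha k powr (-5/6) * (ln (max (4 * j k) 1 / a)) powr (5/6)))
       \<and> (\<forall>s::real. s > sqrt (ln 2 / 2) \<and> s > sqrt (ln (max (4 * j k) 1) / 2) \<longrightarrow>
            measure M {\<omega> \<in> space M. (SUP x\<in>{K..K+d}. \<bar>bridge_L A K d \<omega> k x\<bar>) \<ge> s * sqrt d}
              \<le> 98 * exp (189 * alpha k powr (-5))
                  * exp (- 2 * s ^ 2 * (1 - 2 powr (2/3) * alpha k powr (-5/6) * s powr (-1/3))))"
proof -
  have d0: "d > 0" using d by simp
  have BBK: "is_brownian_bridge K d (BB K)" using BB by simp
  have al: "0 < alpha k" "alpha k \<le> 1" using alpha_range k by auto
  have ack: "absolutely_continuous (BB K) (bridge_law M A K d k)" using abs_cont k by simp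
  have jk: "(\<integral>\<^sup>+ g. ennreal (exp (alpha k * (max 0 (ln (rn_density M A (BB K) K d k g))) powr (6/5))) \<partial>BB K) = ennreal (j k)"
    using j_def k by simp
  interpret M: prob_space M using ale by (simp add: airy_line_ensemble_def)
  interpret mu: prob_space "BB K" using BBK by (simp add: is_brownian_bridge_def)
  have setsmu: "sets (BB K) = sets (bridge_space K d)" using BBK by (simp add: is_brownian_bridge_def)
  define F where "F \<omega> = restrict (bridge_L A K d \<omega> k) {K..K+d}" for \<omega>
  have Fm: "F \<in> M \<rightarrow>\<^sub>M bridge_space K d" unfolding F_def by (rule F_props(1)[OF ale d0 k])
  have FC: "\<omega> \<in> space M \<Longrightarrow> F \<omega> \<in> C0 K d" for \<omega> unfolding F_def by (rule F_props(2)[OF ale d0 k])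
  have gen': "measure M {\<omega> \<in> space M. restrict (bridge_L A K d \<omega> k) {K..K+d} \<in> S}
     \<le> a' * 49 * exp (189 * alpha k powr (-5)) * exp (alpha k powr (-5/6) * (ln (max (4 * j k) 1 / a')) powr (5/6))"
    if "S \<in> sets (bridge_space K d)" "measure (BB K) S \<le> a'" "0 < a'" "a' \<le> max (4 * j k) 1" for S a'
    by (rule gen[OF ale d0 k BBK al ack jk that])
  show ?thesis
  proof (intro conjI ballI allI impI)
    fix S assume S: "S \<in> sets (bridge_space K d)"
    show "let a = measure (BB K) S in
            measure M {\<omega> \<in> space M. restrict (bridge_L A K d \<omega> k) {K..K+d} \<in> S}
              \<le> a * 49 * exp (189 * alpha k powr (-5))
                  * exp (alpha k powr (-5/6) * (ln (max (4 * j k) 1 / a)) powr (5/6))"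
    proof (cases "measure (BB K) S = 0")
      case True
      have "S \<in> null_sets (BB K)" using True S setsmu by (intro null_setsI) (simp_all add: mu.emeasure_eq_measure)
      then have "S \<in> null_sets (bridge_law M A K d k)" using ack by (auto simp: absolutely_continuous_def)
      then have "measure (bridge_law M A K d k) S = 0" by (simp add: measure_def null_sets_def)
      moreover have "measure (bridge_law M A K d k) S = measure M {\<omega> \<in> space M. F \<omega> \<in> S}"
        unfolding bridge_law_def F_def[symmetric] using measure_distr[OF Fm S]
        by (simp add: vimage_def Int_def conj_commute)
      ultimately show ?thesis using True by (simp add: F_def Let_def)
    next
      case False
      then have a0: "measure (BB K) S > 0" using measure_nonneg[of "BB K" S] by linarith
      have "measure (BB K) S \<le> 1" by simp
      then have "measure (BB K) S \<le> max (4 * j k) 1" by linarith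
      then show ?thesis using gen'[OF S order_refl a0] by (simp add: Let_def)
    qed
  next
    fix s :: real assume s: "s > sqrt (ln 2 / 2) \<and> s > sqrt (ln (max (4 * j k) 1) / 2)"
    have "sqrt (ln 2 / 2) \<ge> 0" by simp
    then have s0: "s > 0" using s by linarith
    define x where "x = s * sqrt d"
    have x0: "x > 0" using s0 d0 by (simp add: x_def)
    define S where "S = Sx K d x"
    have S: "S \<in> sets (bridge_space K d)" unfolding S_def by (rule Sx_meas[OF d0])
    have "measure (BB K) S \<le> 2 * exp (-2*x^2/d)" unfolding S_def by (rule Sx_bound[OF BBK d0 x0])
    also have "-2*x^2/d = - 2 * s^2" using d0 by (simp add: x_def power_mult_distrib)
    finally have mS: "measure (BB K) S \<le> 2 * exp (- 2 * s^2)" .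
    have sub: "{\<omega> \<in> space M. (SUP x\<in>{K..K+d}. \<bar>bridge_L A K d \<omega> k x\<bar>) \<ge> s * sqrt d}
          \<subseteq> {\<omega> \<in> space M. restrict (bridge_L A K d \<omega> k) {K..K+d} \<in> S}"
    proof safe
      fix \<omega> assume \<omega>: "\<omega> \<in> space M" and sup: "s * sqrt d \<le> (SUP x\<in>{K..K+d}. \<bar>bridge_L A K d \<omega> k x\<bar>)"
      have "(SUP t\<in>{K..K+d}. \<bar>F \<omega> t\<bar>) = (SUP t\<in>{K..K+d}. \<bar>bridge_L A K d \<omega> k t\<bar>)"
        by (rule SUP_cong) (auto simp: F_def)
      then have "F \<omega> \<in> S" unfolding S_def using Sx_cover[OF FC[OF \<omega>] d0 x0] sup by (simp add: x_def)
      then show "restrict (bridge_L A K d \<omega> k) {K..K+d} \<in> S" by (simp add: F_def)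
    qed
    have msets: "{\<omega> \<in> space M. restrict (bridge_L A K d \<omega> k) {K..K+d} \<in> S} \<in> sets M"
      using measurable_sets[OF Fm S] unfolding F_def by (simp add: vimage_def Int_def conj_commute)
    have fr: "2 * exp (- 2 * s ^ 2) * 49 * exp (189 * alpha k powr - 5) * exp (alpha k powr (- 5 / 6) * ln (max (4 * j k) 1 / (2 * exp (- 2 * s ^ 2))) powr (5 / 6))
       \<le> 98 * exp (189 * alpha k powr - 5) * exp (- 2 * s\<^sup>2 * (1 - 2 powr (2 / 3) * alpha k powr (- 5 / 6) * s powr (- 1 / 3)))"
      and a'0: "0 < 2 * exp (- 2 * s ^ 2)" and a'1: "2 * exp (- 2 * s ^ 2) \<le> max (4 * j k) 1"
      using final_real[of s "j k" "alpha k" "exp (189 * alpha k powr - 5)"] s al by auto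
    have "measure M {\<omega> \<in> space M. (SUP x\<in>{K..K+d}. \<bar>bridge_L A K d \<omega> k x\<bar>) \<ge> s * sqrt d}
        \<le> measure M {\<omega> \<in> space M. restrict (bridge_L A K d \<omega> k) {K..K+d} \<in> S}"
      using sub msets by (rule M.finite_measure_mono)
    also have "\<dots> \<le> 2 * exp (- 2 * s ^ 2) * 49 * exp (189 * alpha k powr (-5)) * exp (alpha k powr (-5/6) * (ln (max (4 * j k) 1 / (2 * exp (- 2 * s ^ 2)))) powr (5/6))"
      by (rule gen'[OF S mS a'0 a'1])
    also note fr
    finally show "measure M {\<omega> \<in> space M. (SUP x\<in>{K..K+d}. \<bar>bridge_L A K d \<omega> k x\<bar>) \<ge> s * sqrt d}
              \<le> 98 * exp (189 * alpha k powr (-5))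
                  * exp (- 2 * s ^ 2 * (1 - 2 powr (2/3) * alpha k powr (-5/6) * s powr (-1/3)))" .
  qed
qed


end
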